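(* Fix an integer $m\geq 2$. Let $\Gamma$ be a geometric distance-regular graph with smallest eigenvalue $-m$, diameter $D\geq 2$ and intersection number $c_2$. If $c_2\geq 2$, then $D<m^2$.
   Context: A finite connected graph $\Gamma$ with diameter $D$ is distance-regular if there are integers $b_i,c_i$ ($0\le i\le D$) such that for any vertices $x,y$ with $d(x,y)=i$, exactly $c_i$ neighbours of $y$ are at distance $i-1$ from $x$ and exactly $b_i$ neighbours of $y$ are at distance $i+1$ from $x$; its valency is $k=b_0$. The smallest eigenvalue $\theta_D$ is that of the adjacency matrix. A Delsarte clique is a clique with exactly $1+\frac{k}{-\theta_D}$ vertices. A non-complete distance-regular graph is geometric if there is a set $\mathcal C$ of Delsarte cliques such that every edge lies in exactly one member of $\mathcal C$. *)

theory Defs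
  imports Main "HOL-Library.Transitive_Closure_Table" Complex_Main
begin

definition simple_graph :: "'a set \<Rightarrow> ('a \<Rightarrow> 'a \<Rightarrow> bool) \<Rightarrow> bool" where
  "simple_graph V E \<longleftrightarrow> finite V \<and> V \<noteq> {} \<and>
     (\<forall>x y. E x y \<longrightarrow> x \<in> V \<and> y \<in> V) \<and>
     (\<forall>x y. E x y \<longrightarrow> E y x) \<and> (\<forall>x. \<not> E x x)"

definition edge_rel :: "'a set \<Rightarrow> ('a \<Rightarrow> 'a \<Rightarrow> bool) \<Rightarrow> ('a \<times> 'a) set" where
  "edge_rel V E = {(x, y). x \<in> V \<and> y \<in> V \<and> E x y}"

definition connected_graph :: "'a set \<Rightarrow> ('a \<Rightarrow> 'a \<Rightarrow> bool) \<Rightarrow> bool" where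
  "connected_graph V E \<longleftrightarrow> (\<forall>x\<in>V. \<forall>y\<in>V. \<exists>n. (x, y) \<in> edge_rel V E ^^ n)"

definition gdist :: "'a set \<Rightarrow> ('a \<Rightarrow> 'a \<Rightarrow> bool) \<Rightarrow> 'a \<Rightarrow> 'a \<Rightarrow> nat" where
  "gdist V E x y = (LEAST n. (x, y) \<in> edge_rel V E ^^ n)"

definition diameter :: "'a set \<Rightarrow> ('a \<Rightarrow> 'a \<Rightarrow> bool) \<Rightarrow> nat" where
  "diameter V E = Max {gdist V E x y | x y. x \<in> V \<and> y \<in> V}"

definition distance_regular ::
  "'a set \<Rightarrow> ('a \<Rightarrow> 'a \<Rightarrow> bool) \<Rightarrow> (nat \<Rightarrow> nat) \<Rightarrow> (nat \<Rightarrow> nat) \<Rightarrow> bool" where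
  "distance_regular V E b c \<longleftrightarrow> simple_graph V E \<and> connected_graph V E \<and>
     (\<forall>x\<in>V. \<forall>y\<in>V.
        card {z \<in> V. E y z \<and> gdist V E x z + 1 = gdist V E x y} = c (gdist V E x y) \<and>
        card {z \<in> V. E y z \<and> gdist V E x z = gdist V E x y + 1} = b (gdist V E x y))"

definition adj_eigenvalue :: "'a set \<Rightarrow> ('a \<Rightarrow> 'a \<Rightarrow> bool) \<Rightarrow> real \<Rightarrow> bool" where
  "adj_eigenvalue V E \<theta> \<longleftrightarrow> (\<exists>f :: 'a \<Rightarrow> real. (\<exists>x\<in>V. f x \<noteq> 0) \<and>
     (\<forall>x\<in>V. (\<Sum>y\<in>V. (if E x y then 1 else 0) * f y) = \<theta> * f x))"

definition smallest_eigenvalue :: "'a set \<Rightarrow> ('a \<Rightarrow> 'a \<Rightarrow> bool) \<Rightarrow> real \<Rightarrow> bool" where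
  "smallest_eigenvalue V E \<theta> \<longleftrightarrow> adj_eigenvalue V E \<theta> \<and> (\<forall>\<mu>. adj_eigenvalue V E \<mu> \<longrightarrow> \<theta> \<le> \<mu>)"

definition is_clique :: "'a set \<Rightarrow> ('a \<Rightarrow> 'a \<Rightarrow> bool) \<Rightarrow> 'a set \<Rightarrow> bool" where
  "is_clique V E C \<longleftrightarrow> C \<subseteq> V \<and> (\<forall>x\<in>C. \<forall>y\<in>C. x \<noteq> y \<longrightarrow> E x y)"

definition delsarte_clique ::
  "'a set \<Rightarrow> ('a \<Rightarrow> 'a \<Rightarrow> bool) \<Rightarrow> nat \<Rightarrow> real \<Rightarrow> 'a set \<Rightarrow> bool" where
  "delsarte_clique V E k \<theta> C \<longleftrightarrow> is_clique V E C \<and> real (card C) = 1 + real k / (- \<theta>)"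

definition complete_graph :: "'a set \<Rightarrow> ('a \<Rightarrow> 'a \<Rightarrow> bool) \<Rightarrow> bool" where
  "complete_graph V E \<longleftrightarrow> (\<forall>x\<in>V. \<forall>y\<in>V. x \<noteq> y \<longrightarrow> E x y)"

definition geometric ::
  "'a set \<Rightarrow> ('a \<Rightarrow> 'a \<Rightarrow> bool) \<Rightarrow> nat \<Rightarrow> real \<Rightarrow> bool" where
  "geometric V E k \<theta> \<longleftrightarrow> \<not> complete_graph V E \<and>
     (\<exists>\<C>. (\<forall>C\<in>\<C>. delsarte_clique V E k \<theta> C) \<and>
          (\<forall>x y. E x y \<longrightarrow> (\<exists>!C. C \<in> \<C> \<and> x \<in> C \<and> y \<in> C)))"

end

theory Submission
  imports Defs
begin


locale gr =
  fixes V :: "'a set" and E :: "'a \<Rightarrow> 'a \<Rightarrow> bool"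
  assumes sg: "simple_graph V E" and conn: "connected_graph V E"
begin

abbreviation "R \<equiv> edge_rel V E"
abbreviation "d \<equiv> gdist V E"

lemma finV: "finite V" and Vne: "V \<noteq> {}" and EV: "E x y \<Longrightarrow> x \<in> V \<and> y \<in> V"
  and Esym: "E x y \<Longrightarrow> E y x" and Eirr: "\<not> E x x"
  using sg unfolding simple_graph_def by blast+

lemma R_iff: "(x,y) \<in> R \<longleftrightarrow> E x y"
  using EV unfolding edge_rel_def by auto

lemma R_sym: "(x,y) \<in> R^^n \<Longrightarrow> (y,x) \<in> R^^n"
proof (induction n arbitrary: x y)
  case 0 then show ?case by simp
next
  case (Suc n)
  from Suc.prems obtain w where "(x,w) \<in> R^^n" "(w,y) \<in> R" by (rule relpow_Suc_E)
  then have "(w,x) \<in> R^^n" "(y,w) \<in> R" using Suc.IH R_iff Esym by auto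
  then show ?case by (meson relpow_Suc_I2)
qed

lemma d_sym: "d x y = d y x"
proof -
  have "\<And>n. ((x,y) \<in> R^^n) = ((y,x) \<in> R^^n)" using R_sym by blast
  then show ?thesis unfolding gdist_def by simp
qed

lemma d_ex: "x \<in> V \<Longrightarrow> y \<in> V \<Longrightarrow> (x,y) \<in> R^^(d x y)"
  using conn unfolding connected_graph_def gdist_def by (meson LeastI_ex)

lemma d_le: "(x,y) \<in> R^^n \<Longrightarrow> d x y \<le> n"
  unfolding gdist_def by (rule Least_le)

lemma d_refl: "d x x = 0"
  using d_le[of x x 0] by simp

lemma d_0: "x \<in> V \<Longrightarrow> y \<in> V \<Longrightarrow> d x y = 0 \<longleftrightarrow> x = y"
  using d_ex[of x y] d_refl by auto

lemma d_1: assumes "x \<in> V" "y \<in> V" shows "d x y = 1 \<longleftrightarrow> E x y"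
proof
  assume "d x y = 1" then show "E x y" using d_ex[OF assms] R_iff by simp
next
  assume e: "E x y"
  then have "d x y \<le> 1" using d_le[of x y 1] R_iff by simp
  moreover have "x \<noteq> y" using e Eirr by auto
  ultimately show "d x y = 1" using d_0[OF assms] by linarith
qed

lemma d_tri: "x \<in> V \<Longrightarrow> y \<in> V \<Longrightarrow> z \<in> V \<Longrightarrow> d x z \<le> d x y + d y z"
  by (meson d_ex relpow_trans d_le)

lemma d_adj: assumes "x \<in> V" "E y z" shows "d x z \<le> d x y + 1" "d x y \<le> d x z + 1"
proof -
  have yz: "y \<in> V" "z \<in> V" using EV assms by auto
  have "d y z = 1" "d z y = 1" using d_1 yz assms(2) Esym by auto
  then show "d x z \<le> d x y + 1" "d x y \<le> d x z + 1"
    using d_tri[OF assms(1) yz(1) yz(2)] d_tri[OF assms(1) yz(2) yz(1)] by auto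
qed

lemma d_pred: assumes "x \<in> V" "z \<in> V" "d x z = Suc n"
  shows "\<exists>y\<in>V. d x y = n \<and> E y z"
proof -
  have "(x,z) \<in> R^^Suc n" using d_ex assms by metis
  then obtain y where xy: "(x,y) \<in> R^^n" and yz: "(y,z) \<in> R" by (rule relpow_Suc_E)
  have e: "E y z" using yz R_iff by simp
  then have yV: "y \<in> V" using EV by auto
  have "d x y \<le> n" using d_le xy by simp
  moreover have "Suc n \<le> d x y + 1" using d_adj(1)[OF assms(1) e] assms(3) by simp
  ultimately show ?thesis using yV e by auto
qed

lemma d_down: assumes "x \<in> V" "z \<in> V" "j \<le> d x z" shows "\<exists>y\<in>V. d x y = j"
  using assms
proof (induction "d x z" arbitrary: z)
  case 0 then show ?case by auto
next
  case (Suc n)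
  show ?case
  proof (cases "j = Suc n")
    case True then show ?thesis using Suc by metis
  next
    case False
    obtain y where "y \<in> V" "d x y = n" "E y z" using d_pred Suc by metis
    then show ?thesis using Suc False by (metis le_SucE)
  qed
qed

definition "diam = diameter V E"

lemma diam_fin: "finite {d x y | x y. x \<in> V \<and> y \<in> V}"
proof -
  have "{d x y | x y. x \<in> V \<and> y \<in> V} = (\<lambda>(x,y). d x y) ` (V \<times> V)" by auto
  then show ?thesis using finV by simp
qed

lemma d_le_diam: "x \<in> V \<Longrightarrow> y \<in> V \<Longrightarrow> d x y \<le> diam"
  unfolding diam_def diameter_def using diam_fin by (intro Max_ge) auto

lemma diam_att: "\<exists>x\<in>V. \<exists>y\<in>V. d x y = diam"
proof -
  have "{d x y | x y. x \<in> V \<and> y \<in> V} \<noteq> {}" using Vne by auto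
  then have "diam \<in> {d x y | x y. x \<in> V \<and> y \<in> V}" unfolding diam_def diameter_def
    using diam_fin Max_in by blast
  then obtain x y where "x\<in>V" "y\<in>V" "diam = d x y" by blast
  then show ?thesis by metis
qed

lemma config: assumes "i < diam" shows "\<exists>x\<in>V. \<exists>y\<in>V. \<exists>z\<in>V. d x y = i \<and> d x z = Suc i \<and> E y z"
proof -
  obtain x z where xz: "x \<in> V" "z \<in> V" "d x z = diam" using diam_att by auto
  obtain z' where "z' \<in> V" "d x z' = Suc i" using d_down[OF xz(1,2)] xz(3) assms by (metis Suc_leI)
  then show ?thesis using d_pred xz(1) by metis
qed

end



locale drg = gr +
  fixes b c :: "nat \<Rightarrow> nat"
  assumes cnt_c: "x \<in> V \<Longrightarrow> y \<in> V \<Longrightarrow> card {z \<in> V. E y z \<and> d x z + 1 = d x y} = c (d x y)"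
  and cnt_b: "x \<in> V \<Longrightarrow> y \<in> V \<Longrightarrow> card {z \<in> V. E y z \<and> d x z = d x y + 1} = b (d x y)"
begin

definition "N y = {w \<in> V. E y w}"

lemma N_fin: "finite (N y)" unfolding N_def using finV by simp

lemma deg: "y \<in> V \<Longrightarrow> card (N y) = b 0"
proof -
  assume y: "y \<in> V"
  have "{z \<in> V. E y z \<and> d y z = d y y + 1} = N y" unfolding N_def using d_1 y d_refl by auto
  then show ?thesis using cnt_b[OF y y] d_refl by simp
qed

lemma c0: "c 0 = 0"
proof -
  obtain x where x: "x \<in> V" using Vne by auto
  have "{z \<in> V. E x z \<and> d x z + 1 = d x x} = {}" using d_refl by auto
  then show ?thesis using cnt_c[OF x x] d_refl by simp
qed

lemma nbr_d: assumes "x \<in> V" "E y w"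
  shows "d x w + 1 = d x y \<or> d x w = d x y \<or> d x w = d x y + 1"
  using d_adj[OF assms] by linarith

lemma a_cnt: assumes x: "x \<in> V" and y: "y \<in> V"
  shows "card {w \<in> V. E y w \<and> d x w = d x y} + b (d x y) + c (d x y) = b 0"
proof -
  let ?A = "{w \<in> V. E y w \<and> d x w + 1 = d x y}"
  let ?B = "{w \<in> V. E y w \<and> d x w = d x y}"
  let ?C = "{w \<in> V. E y w \<and> d x w = d x y + 1}"
  have u: "N y = ?A \<union> (?B \<union> ?C)" unfolding N_def using nbr_d[OF x] by blast
  have f: "finite ?A" "finite ?B" "finite ?C" using finV by auto
  have d1: "?A \<inter> (?B \<union> ?C) = {}" by auto
  have d2: "?B \<inter> ?C = {}" by auto
  have "card (N y) = card ?A + (card ?B + card ?C)"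
    unfolding u using card_Un_disjoint[OF f(1) _ d1] card_Un_disjoint[OF f(2,3) d2] f by simp
  then show ?thesis using deg[OF y] cnt_b[OF x y] cnt_c[OF x y] by simp
qed

lemma mu: assumes "w \<in> V" "z \<in> V" "d w z = 2" shows "card (N z \<inter> N w) = c 2"
proof -
  have "{t \<in> V. E z t \<and> d w t + 1 = d w z} = N z \<inter> N w"
    unfolding N_def using assms d_1 Esym by auto
  then show ?thesis using cnt_c[OF assms(1,2)] assms(3) by simp
qed

lemma b_pos: assumes "j < diam" shows "b j > 0"
proof -
  obtain x y z where "x\<in>V" "y\<in>V" "z\<in>V" "d x y = j" "d x z = Suc j" "E y z"
    using config[OF assms] by blast
  then have "z \<in> {w \<in> V. E y w \<and> d x w = d x y + 1}" by simp
  moreover have "finite {w \<in> V. E y w \<and> d x w = d x y + 1}" using finV by simp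
  ultimately have "card {w \<in> V. E y w \<and> d x w = d x y + 1} > 0"
    using card_gt_0_iff by blast
  then show ?thesis using cnt_b \<open>x\<in>V\<close> \<open>y\<in>V\<close> \<open>d x y = j\<close> by metis
qed

lemma c_pos: assumes "j < diam" shows "c (Suc j) > 0"
proof -
  obtain x y z where "x\<in>V" "y\<in>V" "z\<in>V" "d x y = j" "d x z = Suc j" "E y z"
    using config[OF assms] by blast
  then have "y \<in> {w \<in> V. E z w \<and> d x w + 1 = d x z}" using Esym by simp
  moreover have "finite {w \<in> V. E z w \<and> d x w + 1 = d x z}" using finV by simp
  ultimately have "card {w \<in> V. E z w \<and> d x w + 1 = d x z} > 0"
    using card_gt_0_iff by blast
  then show ?thesis using cnt_c \<open>x\<in>V\<close> \<open>z\<in>V\<close> \<open>d x z = Suc j\<close> by metis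
qed

lemma b_diam: "b diam = 0"
proof -
  obtain x y where xy: "x \<in> V" "y \<in> V" "d x y = diam" using diam_att by blast
  have e: "{w \<in> V. E y w \<and> d x w = d x y + 1} = {}"
  proof (rule ccontr)
    assume "{w \<in> V. E y w \<and> d x w = d x y + 1} \<noteq> {}"
    then obtain w where "w \<in> V" "d x w = diam + 1" using xy by auto
    then show False using d_le_diam[OF xy(1)] by fastforce
  qed
  have "b diam = card {w \<in> V. E y w \<and> d x w = d x y + 1}" using cnt_b[OF xy(1,2)] xy(3) by simp
  also have "\<dots> = 0" unfolding e by simp
  finally show ?thesis .
qed

lemma c_le: assumes "j \<le> diam" shows "c j \<le> b 0"
proof -
  obtain x z where xz: "x \<in> V" "z \<in> V" "d x z = diam" using diam_att by blast
  obtain y where y: "y \<in> V" "d x y = j" using d_down[OF xz(1,2)] xz(3) assms by metis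
  have "{w \<in> V. E y w \<and> d x w + 1 = d x y} \<subseteq> N y" unfolding N_def by auto
  then have "card {w \<in> V. E y w \<and> d x w + 1 = d x y} \<le> card (N y)" using N_fin card_mono by blast
  then show ?thesis using cnt_c[OF xz(1) y(1)] y(2) deg[OF y(1)] by simp
qed

lemma c1: assumes "0 < diam" shows "c 1 = 1"
proof -
  obtain x y z where "x\<in>V" "y\<in>V" "z\<in>V" "d x y = 0" "d x z = 1" "E y z"
    using config[of 0] assms by auto
  then have xy: "x = y" using d_0 by blast
  have "{w \<in> V. E z w \<and> d x w + 1 = d x z} = {x}"
  proof (intro equalityI subsetI)
    fix w assume "w \<in> {w \<in> V. E z w \<and> d x w + 1 = d x z}"
    then have "w \<in> V" "d x w = 0" using \<open>d x z = 1\<close> by auto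
    then show "w \<in> {x}" using d_0 \<open>x\<in>V\<close> by auto
  next
    fix w assume "w \<in> {x}"
    then show "w \<in> {w \<in> V. E z w \<and> d x w + 1 = d x z}"
      using \<open>d x z = 1\<close> \<open>E y z\<close> xy \<open>x\<in>V\<close> d_refl Esym by auto
  qed
  then show ?thesis using cnt_c[OF \<open>x\<in>V\<close> \<open>z\<in>V\<close>] \<open>d x z = 1\<close> by simp
qed

end



lemma dc_swap:
  assumes "finite W" "finite P" "\<And>w. w \<in> W \<Longrightarrow> T w \<subseteq> P"
  shows "(\<Sum>w\<in>W. card (T w)) = (\<Sum>t\<in>P. card {w \<in> W. t \<in> T w})"
proof -
  have "(\<Sum>w\<in>W. card (T w)) = (\<Sum>w\<in>W. \<Sum>t\<in>P. (if t \<in> T w then 1 else 0))"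
  proof (rule sum.cong)
    fix w assume "w \<in> W"
    then have "T w = {t \<in> P. t \<in> T w}" using assms(3) by auto
    then have "card (T w) = card {t \<in> P. t \<in> T w}" by simp
    also have "\<dots> = (\<Sum>t\<in>P. (if t \<in> T w then 1 else 0))" using assms(2)
      by (simp add: sum.If_cases Int_def)
    finally show "card (T w) = (\<Sum>t\<in>P. (if t \<in> T w then 1 else 0))" .
  qed simp
  also have "\<dots> = (\<Sum>t\<in>P. \<Sum>w\<in>W. (if t \<in> T w then 1 else 0))" by (rule sum.swap)
  also have "\<dots> = (\<Sum>t\<in>P. card {w \<in> W. t \<in> T w})" using assms(1)
    by (simp add: sum.If_cases Int_def)
  finally show ?thesis .
qed

locale geo = drg +
  fixes m :: nat and CC :: "'a set set" and s :: nat
  assumes m2: "m \<ge> 2"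
  and CCc: "C \<in> CC \<Longrightarrow> C \<subseteq> V \<and> (\<forall>x\<in>C. \<forall>y\<in>C. x \<noteq> y \<longrightarrow> E x y)"
  and CCs: "C \<in> CC \<Longrightarrow> card C = s"
  and sk: "real s = 1 + real (b 0) / real m"
  and uq: "E x y \<Longrightarrow> \<exists>!C. C \<in> CC \<and> x \<in> C \<and> y \<in> C"
  and D2: "2 \<le> diam"
  and c22: "2 \<le> c 2"
begin

lemma CC_V: "C \<in> CC \<Longrightarrow> C \<subseteq> V" using CCc by blast
lemma CC_E: "C \<in> CC \<Longrightarrow> x \<in> C \<Longrightarrow> y \<in> C \<Longrightarrow> x \<noteq> y \<Longrightarrow> E x y" using CCc by blast

lemma CC_fin: "finite CC"
proof -
  have "CC \<subseteq> Pow V" using CC_V by auto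
  then show ?thesis by (rule finite_subset) (simp add: finV)
qed

lemma k_pos: "b 0 > 0" using b_pos D2 by simp

lemma k_eq: "b 0 = m * (s - 1)" and s2: "s \<ge> 2"
proof -
  have m0: "real m > 0" using m2 by simp
  have "real s * real m = real m + real (b 0)" using sk m0 by (simp add: field_simps)
  then have "real (s * m) = real (m + b 0)" by simp
  then have "s * m = m + b 0" by (simp only: of_nat_eq_iff)
  then have "b 0 = s * m - m" by simp
  also have "\<dots> = m * (s - 1)" by (simp add: diff_mult_distrib2 mult.commute)
  finally show "b 0 = m * (s - 1)" .
  have "s \<noteq> 0"
  proof
    assume "s = 0" then show False using \<open>s * m = m + b 0\<close> k_pos by simp
  qed
  moreover have "s \<noteq> 1"
  proof
    assume "s = 1" then show False using \<open>s * m = m + b 0\<close> k_pos by simp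
  qed
  ultimately show "s \<ge> 2" by arith
qed

lemma line_eq: assumes a: "C \<in> CC" "C' \<in> CC" "p \<in> C" "q \<in> C" "p \<in> C'" "q \<in> C'" "p \<noteq> q"
  shows "C = C'"
proof -
  have "E p q" using CC_E a by blast
  then have u: "\<exists>!X. X \<in> CC \<and> p \<in> X \<and> q \<in> X" by (rule uq)
  show ?thesis
  proof (rule ex1E[OF u])
    fix C0 assume h: "\<forall>y. y \<in> CC \<and> p \<in> y \<and> q \<in> y \<longrightarrow> y = C0"
    have "C = C0" using h[rule_format, of C] a by simp
    moreover have "C' = C0" using h[rule_format, of C'] a by simp
    ultimately show ?thesis by simp
  qed
qed

lemma line_ex: assumes "E x y" shows "\<exists>C\<in>CC. x \<in> C \<and> y \<in> C"
proof -
  have "\<exists>X. X \<in> CC \<and> x \<in> X \<and> y \<in> X" using uq[OF assms] by (rule ex1_implies_ex)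
  then show ?thesis by (simp add: Bex_def)
qed

definition "LZ z = {C \<in> CC. z \<in> C}"

lemma LZ_card: assumes z: "z \<in> V" shows "card (LZ z) = m"
proof -
  have fin: "finite (LZ z)" unfolding LZ_def using CC_fin by simp
  have u: "N z = (\<Union>C\<in>LZ z. C - {z})"
  proof (intro equalityI subsetI)
    fix w assume "w \<in> N z"
    then have "E z w" unfolding N_def by simp
    then obtain C where "C \<in> CC" "z \<in> C" "w \<in> C" using line_ex by blast
    moreover have "w \<noteq> z" using \<open>E z w\<close> Eirr by auto
    ultimately show "w \<in> (\<Union>C\<in>LZ z. C - {z})" unfolding LZ_def by auto
  next
    fix w assume "w \<in> (\<Union>C\<in>LZ z. C - {z})"
    then obtain C where "C \<in> CC" "z \<in> C" "w \<in> C" "w \<noteq> z" unfolding LZ_def by auto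
    then show "w \<in> N z" unfolding N_def using CC_E CC_V by blast
  qed
  have "card (N z) = (\<Sum>C\<in>LZ z. card (C - {z}))"
    unfolding u
  proof (rule card_UN_disjoint[OF fin])
    show "\<forall>C\<in>LZ z. finite (C - {z})"
    proof
      fix C assume "C \<in> LZ z"
      then have "C \<subseteq> V" unfolding LZ_def using CC_V by auto
      then have "finite C" using finV by (rule finite_subset)
      then show "finite (C - {z})" by simp
    qed
    show "\<forall>C\<in>LZ z. \<forall>C'\<in>LZ z. C \<noteq> C' \<longrightarrow> (C - {z}) \<inter> (C' - {z}) = {}"
    proof (intro ballI impI)
      fix C C' assume CC': "C \<in> LZ z" "C' \<in> LZ z" "C \<noteq> C'"
      show "(C - {z}) \<inter> (C' - {z}) = {}"
      proof (rule ccontr)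
        assume "(C - {z}) \<inter> (C' - {z}) \<noteq> {}"
        then obtain w where "w \<in> C" "w \<in> C'" "w \<noteq> z" by auto
        then have "C = C'" using line_eq[of C C' z w] CC' unfolding LZ_def by auto
        then show False using CC' by simp
      qed
    qed
  qed
  also have "\<dots> = (\<Sum>C\<in>LZ z. s - 1)"
  proof (rule sum.cong)
    fix C assume "C \<in> LZ z"
    then have "C \<in> CC" "z \<in> C" unfolding LZ_def by auto
    moreover have "finite C" using CC_V[OF \<open>C\<in>CC\<close>] finV by (rule finite_subset)
    ultimately show "card (C - {z}) = s - 1" using CCs by simp
  qed simp
  finally have "b 0 = card (LZ z) * (s - 1)" using deg[OF z] by simp
  then have "card (LZ z) * (s - 1) = m * (s - 1)" using k_eq by metis
  then have "card (LZ z) = m \<or> s - 1 = 0" by (simp only: mult_cancel2)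
  then show ?thesis using s2 by auto
qed

definition "S x i = {t \<in> V. d x t = i}"

lemma line_dist: assumes x: "x \<in> V" and L: "L \<in> CC" "y \<in> L" "t \<in> L"
  shows "d x t \<le> d x y + 1"
proof (cases "t = y")
  case True then show ?thesis by simp
next
  case False
  then have "E y t" using CC_E L by blast
  then show ?thesis using d_adj[OF x] by blast
qed

end



context geo begin

definition "NoTwo \<longleftrightarrow> (\<forall>v C p q. C \<in> CC \<longrightarrow> v \<in> V \<longrightarrow> v \<notin> C \<longrightarrow> p \<in> C \<longrightarrow> q \<in> C \<longrightarrow> p \<noteq> q \<longrightarrow> E v p \<longrightarrow> E v q \<longrightarrow> False)"

lemma NoTwoD: "NoTwo \<Longrightarrow> C \<in> CC \<Longrightarrow> v \<in> V \<Longrightarrow> v \<notin> C \<Longrightarrow> p \<in> C \<Longrightarrow> q \<in> C \<Longrightarrow> p \<noteq> q \<Longrightarrow> E v p \<Longrightarrow> E v q \<Longrightarrow> False"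
  unfolding NoTwo_def by blast

lemma card_minus_one: assumes "finite A" "y \<in> A" "card A = k" shows "card (A - {y}) = k - 1"
  using assms by simp

lemma Nfin2: "finite (N z \<inter> N w)" using N_fin by simp

lemma lemC:
  assumes H: NoTwo and x: "x \<in> V" and y: "y \<in> V" and z: "z \<in> V"
    and dy: "d x y = i" and dz: "d x z = Suc i" and yz: "E y z"
    and L: "L \<in> CC" "y \<in> L" "z \<in> L"
  shows "c i + card (L \<inter> S x i) \<le> c (Suc i)"
proof -
  define P where "P = (N z \<inter> S x i) - L"
  have "{t \<in> V. E z t \<and> d x t + 1 = d x z} = N z \<inter> S x i"
    unfolding N_def S_def using dz by auto
  then have cS: "c (Suc i) = card (N z \<inter> S x i)" using cnt_c[OF x z] dz by simp
  have LS: "L \<inter> S x i \<subseteq> N z"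
  proof
    fix t assume t: "t \<in> L \<inter> S x i"
    then have "t \<noteq> z" using dz unfolding S_def by auto
    then have "E z t" using CC_E L t by blast
    then show "t \<in> N z" unfolding N_def using EV by blast
  qed
  have fP: "finite P" unfolding P_def using N_fin by simp
  have fL: "finite (L \<inter> S x i)" unfolding S_def using finV by simp
  have spl: "N z \<inter> S x i = (L \<inter> S x i) \<union> P" unfolding P_def using LS by blast
  have "card (N z \<inter> S x i) = card (L \<inter> S x i) + card P"
    unfolding spl by (rule card_Un_disjoint[OF fL fP]) (auto simp: P_def)
  moreover have "c i \<le> card P"
  proof (cases i)
    case 0 then show ?thesis using c0 by simp
  next
    case (Suc i')
    define W where "W = {w \<in> V. E y w \<and> d x w + 1 = i}"
    define T where "T w = (N z \<inter> N w) - {y}" for w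
    have cW: "card W = c i" unfolding W_def using cnt_c[OF x y] dy by simp
    have fW: "finite W" unfolding W_def using finV by simp
    have wprops: "w \<in> V" "E y w" "d x w + 1 = i" "d w z = 2" "E w y" if "w \<in> W" for w
    proof -
      show w: "w \<in> V" "E y w" "d x w + 1 = i" using that unfolding W_def by auto
      show "E w y" using Esym w by blast
      have "d x z \<le> d x w + d w z" using d_tri[OF x w(1) z] .
      then have "2 \<le> d w z" using dz w(3) by linarith
      moreover have "d w z \<le> d w y + d y z" using d_tri[OF w(1) y z] .
      moreover have "d w y = 1" "d y z = 1" using d_1 w y z \<open>E w y\<close> yz by auto
      ultimately show "d w z = 2" by linarith
    qed
    have Tcard: "card (T w) = c 2 - 1" if "w \<in> W" for w
    proof -
      have "card (N z \<inter> N w) = c 2" using mu wprops[OF that] z by blast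
      moreover have "y \<in> N z \<inter> N w" unfolding N_def using wprops[OF that] yz Esym y by auto
      ultimately show ?thesis unfolding T_def using Nfin2 by simp
    qed
    have Tsub: "T w \<subseteq> P" if "w \<in> W" for w
    proof
      fix t assume t: "t \<in> T w"
      note wp = wprops[OF that]
      have tV: "t \<in> V" "E z t" "E w t" "t \<noteq> y" using t unfolding T_def N_def by auto
      have "d x t \<le> d x w + 1" using d_adj(1)[OF x tV(3)] .
      moreover have "d x z \<le> d x t + 1" using d_adj(1)[OF x Esym[OF tV(2)]] .
      ultimately have dt: "d x t = i" using wp(3) dz by linarith
      have wL: "w \<notin> L"
      proof
        assume "w \<in> L"
        moreover have "w \<noteq> z" using wp(3) dz by auto
        ultimately have "E w z" using CC_E L by blast
        then have "d w z = 1" using d_1 wp(1) z by blast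
        then show False using wp(4) by simp
      qed
      have "t \<notin> L"
      proof
        assume tL: "t \<in> L"
        show False by (rule NoTwoD[OF H L(1) wp(1) wL L(2) tL tV(4)[symmetric] wp(5) tV(3)])
      qed
      then show "t \<in> P" unfolding P_def S_def N_def using tV dt by auto
    qed
    have Pcnt: "card {w \<in> W. t \<in> T w} \<le> c 2 - 1" if "t \<in> P" for t
    proof -
      have tV: "t \<in> V" "E z t" "d x t = i" "t \<notin> L" using that unfolding P_def N_def S_def by auto
      have "t \<noteq> y" using tV(4) L by auto
      have nty: "\<not> E t y"
      proof
        assume "E t y"
        moreover have "y \<noteq> z" using yz Eirr by auto
        ultimately show False using NoTwoD[OF H L(1) tV(1) tV(4) L(2) L(3)] Esym[OF tV(2)] by blast
      qed
      have "d t y \<le> d t z + d z y" using d_tri[OF tV(1) z y] .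
      moreover have "d t z = 1" "d z y = 1" using d_1 tV(1) z y Esym[OF tV(2)] Esym[OF yz] by auto
      moreover have "d t y \<noteq> 0" using d_0 tV(1) y \<open>t \<noteq> y\<close> by blast
      moreover have "d t y \<noteq> 1" using d_1 tV(1) y nty by blast
      ultimately have dty: "d t y = 2" by linarith
      have c2: "card (N y \<inter> N t) = c 2" using mu[OF tV(1) y dty] .
      have "z \<in> N y \<inter> N t" unfolding N_def using z yz Esym[OF tV(2)] by auto
      then have "card ((N y \<inter> N t) - {z}) = c 2 - 1" using c2 Nfin2 by simp
      moreover have "{w \<in> W. t \<in> T w} \<subseteq> (N y \<inter> N t) - {z}"
      proof
        fix w assume w: "w \<in> {w \<in> W. t \<in> T w}"
        then have "w \<in> W" "t \<in> T w" by auto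
        note wp = wprops[OF \<open>w \<in> W\<close>]
        have "E w t" using \<open>t \<in> T w\<close> unfolding T_def N_def by auto
        moreover have "w \<noteq> z" using wp(3) dz by auto
        ultimately show "w \<in> (N y \<inter> N t) - {z}" unfolding N_def using wp Esym by auto
      qed
      moreover have "finite ((N y \<inter> N t) - {z})" using Nfin2 by simp
      ultimately show ?thesis by (metis card_mono)
    qed
    have "c i * (c 2 - 1) = (\<Sum>w\<in>W. card (T w))" using Tcard cW by simp
    also have "\<dots> = (\<Sum>t\<in>P. card {w \<in> W. t \<in> T w})" by (rule dc_swap[OF fW fP Tsub])
    also have "\<dots> \<le> (\<Sum>t\<in>P. c 2 - 1)" by (rule sum_mono) (rule Pcnt)
    also have "\<dots> = card P * (c 2 - 1)" by simp
    finally have "c i * (c 2 - 1) \<le> card P * (c 2 - 1)" .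
    moreover have "c 2 - 1 > 0" using c22 by simp
    ultimately show ?thesis by simp
  qed
  ultimately show ?thesis using cS by simp
qed

lemma lemB:
  assumes H: NoTwo and x: "x \<in> V" and y: "y \<in> V" and z: "z \<in> V"
    and dy: "d x y = i" and dz: "d x z = Suc i" and yz: "E y z"
    and L: "L \<in> CC" "y \<in> L" "z \<in> L"
  shows "b (Suc i) + card (L \<inter> S x (Suc i)) \<le> b i"
proof -
  define P where "P = (N y \<inter> S x (Suc i)) - L"
  have "{t \<in> V. E y t \<and> d x t = d x y + 1} = N y \<inter> S x (Suc i)"
    unfolding N_def S_def using dy by auto
  then have bS: "b i = card (N y \<inter> S x (Suc i))" using cnt_b[OF x y] dy by simp
  have LS: "L \<inter> S x (Suc i) \<subseteq> N y"
  proof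
    fix t assume t: "t \<in> L \<inter> S x (Suc i)"
    then have "t \<noteq> y" using dy unfolding S_def by auto
    then have "E y t" using CC_E L t by blast
    then show "t \<in> N y" unfolding N_def using EV by blast
  qed
  have fP: "finite P" unfolding P_def using N_fin by simp
  have fL: "finite (L \<inter> S x (Suc i))" unfolding S_def using finV by simp
  have spl: "N y \<inter> S x (Suc i) = (L \<inter> S x (Suc i)) \<union> P" unfolding P_def using LS by blast
  have "card (N y \<inter> S x (Suc i)) = card (L \<inter> S x (Suc i)) + card P"
    unfolding spl by (rule card_Un_disjoint[OF fL fP]) (auto simp: P_def)
  moreover have "b (Suc i) \<le> card P"
  proof -
    define W where "W = {w \<in> V. E z w \<and> d x w = d x z + 1}"
    define T where "T w = (N y \<inter> N w) - {z}" for w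
    have cW: "card W = b (Suc i)" unfolding W_def using cnt_b[OF x z] dz by simp
    have fW: "finite W" unfolding W_def using finV by simp
    have wprops: "w \<in> V" "E z w" "d x w = Suc (Suc i)" "d w y = 2" "E w z" if "w \<in> W" for w
    proof -
      show w: "w \<in> V" "E z w" "d x w = Suc (Suc i)" using that dz unfolding W_def by auto
      show "E w z" using Esym w by blast
      have "d x w \<le> d x y + d y w" using d_tri[OF x y w(1)] .
      then have "2 \<le> d w y" using dy w(3) d_sym[of y w] by linarith
      moreover have "d w y \<le> d w z + d z y" using d_tri[OF w(1) z y] .
      moreover have "d w z = 1" "d z y = 1" using d_1 w y z \<open>E w z\<close> Esym[OF yz] by auto
      ultimately show "d w y = 2" by linarith
    qed
    have Tcard: "card (T w) = c 2 - 1" if "w \<in> W" for w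
    proof -
      have "card (N y \<inter> N w) = c 2" using mu wprops[OF that] y by blast
      moreover have "z \<in> N y \<inter> N w" unfolding N_def using wprops[OF that] yz Esym z by auto
      ultimately show ?thesis unfolding T_def using Nfin2 by simp
    qed
    have Tsub: "T w \<subseteq> P" if "w \<in> W" for w
    proof
      fix t assume t: "t \<in> T w"
      note wp = wprops[OF that]
      have tV: "t \<in> V" "E y t" "E w t" "t \<noteq> z" using t unfolding T_def N_def by auto
      have "d x t \<le> d x y + 1" using d_adj(1)[OF x tV(2)] .
      moreover have "d x w \<le> d x t + 1" using d_adj(1)[OF x Esym[OF tV(3)]] .
      ultimately have dt: "d x t = Suc i" using wp(3) dy by linarith
      have wL: "w \<notin> L"
      proof
        assume "w \<in> L"
        moreover have "w \<noteq> y" using wp(3) dy by auto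
        ultimately have "E w y" using CC_E L by blast
        then have "d w y = 1" using d_1 wp(1) y by blast
        then show False using wp(4) by simp
      qed
      have "t \<notin> L"
      proof
        assume tL: "t \<in> L"
        show False by (rule NoTwoD[OF H L(1) wp(1) wL L(3) tL tV(4)[symmetric] wp(5) tV(3)])
      qed
      then show "t \<in> P" unfolding P_def S_def N_def using tV dt by auto
    qed
    have Pcnt: "card {w \<in> W. t \<in> T w} \<le> c 2 - 1" if "t \<in> P" for t
    proof -
      have tV: "t \<in> V" "E y t" "d x t = Suc i" "t \<notin> L" using that unfolding P_def N_def S_def by auto
      have "t \<noteq> z" using tV(4) L by auto
      have ntz: "\<not> E t z"
      proof
        assume "E t z"
        moreover have "y \<noteq> z" using yz Eirr by auto
        ultimately show False using NoTwoD[OF H L(1) tV(1) tV(4) L(2) L(3)] Esym[OF tV(2)] by blast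
      qed
      have "d t z \<le> d t y + d y z" using d_tri[OF tV(1) y z] .
      moreover have "d t y = 1" "d y z = 1" using d_1 tV(1) z y Esym[OF tV(2)] yz by auto
      moreover have "d t z \<noteq> 0" using d_0 tV(1) z \<open>t \<noteq> z\<close> by blast
      moreover have "d t z \<noteq> 1" using d_1 tV(1) z ntz by blast
      ultimately have dtz: "d t z = 2" by linarith
      have c2: "card (N z \<inter> N t) = c 2" using mu[OF tV(1) z dtz] .
      have "y \<in> N z \<inter> N t" unfolding N_def using y yz Esym[OF tV(2)] Esym[OF yz] by auto
      then have "card ((N z \<inter> N t) - {y}) = c 2 - 1" using c2 Nfin2 by simp
      moreover have "{w \<in> W. t \<in> T w} \<subseteq> (N z \<inter> N t) - {y}"
      proof
        fix w assume w: "w \<in> {w \<in> W. t \<in> T w}"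
        then have "w \<in> W" "t \<in> T w" by auto
        note wp = wprops[OF \<open>w \<in> W\<close>]
        have "E w t" using \<open>t \<in> T w\<close> unfolding T_def N_def by auto
        moreover have "w \<noteq> y" using wp(3) dy by auto
        ultimately show "w \<in> (N z \<inter> N t) - {y}" unfolding N_def using wp Esym by auto
      qed
      moreover have "finite ((N z \<inter> N t) - {y})" using Nfin2 by simp
      ultimately show ?thesis by (metis card_mono)
    qed
    have "b (Suc i) * (c 2 - 1) = (\<Sum>w\<in>W. card (T w))" using Tcard cW by simp
    also have "\<dots> = (\<Sum>t\<in>P. card {w \<in> W. t \<in> T w})" by (rule dc_swap[OF fW fP Tsub])
    also have "\<dots> \<le> (\<Sum>t\<in>P. c 2 - 1)" by (rule sum_mono) (rule Pcnt)
    also have "\<dots> = card P * (c 2 - 1)" by simp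
    finally have "b (Suc i) * (c 2 - 1) \<le> card P * (c 2 - 1)" .
    moreover have "c 2 - 1 > 0" using c22 by simp
    ultimately show ?thesis by simp
  qed
  ultimately show ?thesis using bS by simp
qed

lemma Lsplit:
  assumes x: "x \<in> V" and dy: "d x y = i" and dz: "d x z = Suc i"
    and L: "L \<in> CC" "y \<in> L" "z \<in> L"
  shows "card (L \<inter> S x i) + card (L \<inter> S x (Suc i)) = s"
proof -
  have LV: "L \<subseteq> V" using CC_V L by blast
  have "L = (L \<inter> S x i) \<union> (L \<inter> S x (Suc i))"
  proof (intro equalityI subsetI)
    fix t assume t: "t \<in> L"
    have "d x t \<le> d x y + 1" using line_dist[OF x L(1,2) t] .
    moreover have "d x z \<le> d x t + 1" using line_dist[OF x L(1) t L(3)] .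
    ultimately have "d x t = i \<or> d x t = Suc i" using dy dz by linarith
    then show "t \<in> (L \<inter> S x i) \<union> (L \<inter> S x (Suc i))" unfolding S_def using t LV by auto
  qed auto
  moreover have "finite L" using LV finV by (rule finite_subset)
  moreover have "(L \<inter> S x i) \<inter> (L \<inter> S x (Suc i)) = {}" unfolding S_def by auto
  ultimately have "card L = card (L \<inter> S x i) + card (L \<inter> S x (Suc i))"
    using card_Un_disjoint[of "L \<inter> S x i" "L \<inter> S x (Suc i)"] by simp
  then show ?thesis using CCs L by simp
qed

lemma terw_step: assumes H: NoTwo and i: "i < diam"
  shows "c i + b (Suc i) + s \<le> c (Suc i) + b i"
proof -
  obtain x y z where xyz: "x \<in> V" "y \<in> V" "z \<in> V" "d x y = i" "d x z = Suc i" "E y z"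
    using config[OF i] by blast
  obtain L where L: "L \<in> CC" "y \<in> L" "z \<in> L" using line_ex[OF xyz(6)] by blast
  have "c i + card (L \<inter> S x i) \<le> c (Suc i)" by (rule lemC[OF H xyz L])
  moreover have "b (Suc i) + card (L \<inter> S x (Suc i)) \<le> b i" by (rule lemB[OF H xyz L])
  moreover have "card (L \<inter> S x i) + card (L \<inter> S x (Suc i)) = s"
    by (rule Lsplit[OF xyz(1,4,5) L])
  ultimately show ?thesis by linarith
qed

lemma terw_tele: assumes H: NoTwo shows "j \<le> diam \<Longrightarrow> b j + j * s \<le> c j + b 0"
proof (induction j)
  case 0 then show ?case using c0 by simp
next
  case (Suc j)
  then have "b j + j * s \<le> c j + b 0" by simp
  moreover have "c j + b (Suc j) + s \<le> c (Suc j) + b j" using terw_step[OF H] Suc.prems by simp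
  ultimately show ?case by simp
qed

lemma terw: assumes H: NoTwo shows "diam < m ^ 2"
proof -
  have t: "b diam + diam * s \<le> c diam + b 0" using terw_tele[OF H] by simp
  have cl: "c diam \<le> b 0" using c_le by simp
  have a1: "diam * s \<le> 2 * (m * (s - 1))" using t cl k_eq by simp
  have a2: "m * (s - 1) < m * s" using m2 s2 by simp
  have a3: "diam * s < 2 * (m * s)" using a1 a2 by linarith
  then have "diam * s < (2 * m) * s" by (simp only: mult.assoc)
  then have a4: "diam < 2 * m" by (rule mult_right_less_imp_less) simp
  have a5: "2 * m \<le> m ^ 2" using m2 by (simp add: power2_eq_square)
  show ?thesis using a4 a5 by simp
qed

end



context geo begin

definition "PsiConst psi \<longleftrightarrow> (\<forall>v C. C \<in> CC \<longrightarrow> v \<in> V \<longrightarrow> v \<notin> C \<longrightarrow> (\<exists>w\<in>C. E v w) \<longrightarrow> card (C \<inter> N v) = psi)"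

definition "down x y = {C \<in> CC. y \<in> C \<and> (\<exists>w\<in>C. d x w + 1 = d x y)}"

lemma down_fin: "finite (down x y)" unfolding down_def using CC_fin by simp

lemma psiD: "PsiConst psi \<Longrightarrow> C \<in> CC \<Longrightarrow> v \<in> V \<Longrightarrow> v \<notin> C \<Longrightarrow> w \<in> C \<Longrightarrow> E v w \<Longrightarrow> card (C \<inter> N v) = psi"
  unfolding PsiConst_def by blast

lemma finC: "C \<in> CC \<Longrightarrow> finite C" using CC_V finV by (meson finite_subset)

lemma tau_step:
  assumes P: "PsiConst psi" and p2: "psi \<ge> 2"
    and x: "x \<in> V" and y: "y \<in> V" and z: "z \<in> V"
    and dy: "d x y = i" and dz: "d x z = Suc i" and yz: "E y z"
  shows "card (down x y) + 1 \<le> card (down x z)"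
proof -
  obtain L where L: "L \<in> CC" "y \<in> L" "z \<in> L" using line_ex[OF yz] by blast
  define Mz where "Mz = down x z - {L}"
  have Ld: "L \<in> down x z" unfolding down_def using L dy dz by auto
  have cz: "card (down x z) = card Mz + 1"
  proof -
    have "card Mz = card (down x z) - 1" unfolding Mz_def using Ld down_fin by (simp add: card_Diff_singleton)
    moreover have "card (down x z) > 0" using Ld down_fin card_gt_0_iff by blast
    ultimately show ?thesis by simp
  qed
  define A where "A D = D \<inter> N z - {y}" for D
  define B where "B M = M \<inter> N y - {z}" for M
  have Dprops: "D \<in> CC" "y \<in> D" "z \<notin> D" "card (A D) = psi - 1" "finite (A D)"
    if D_in: "D \<in> down x y" for D
  proof -
    show D: "D \<in> CC" "y \<in> D" using D_in unfolding down_def by auto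
    from D_in have "\<exists>w\<in>D. d x w + 1 = d x y" unfolding down_def by simp
    then obtain w where w: "w \<in> D" "d x w + 1 = i" using dy by auto
    show zD: "z \<notin> D"
    proof
      assume "z \<in> D"
      moreover have "w \<noteq> z" using w dz by auto
      ultimately have "E w z" using CC_E D w by blast
      then have "d x z \<le> d x w + 1" using d_adj(1)[OF x] by blast
      then show False using w dz by simp
    qed
    have "card (D \<inter> N z) = psi" using psiD[OF P D(1) z zD D(2) Esym[OF yz]] .
    moreover have "y \<in> D \<inter> N z" unfolding N_def using D y Esym[OF yz] by auto
    moreover have "finite (D \<inter> N z)" using N_fin by simp
    ultimately show "card (A D) = psi - 1" unfolding A_def by simp
    show "finite (A D)" unfolding A_def using N_fin by simp
  qed
  have Mprops: "card (B M) = psi - 1" "finite (B M)" if "M \<in> Mz" for M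
  proof -
    have M: "M \<in> CC" "z \<in> M" "M \<noteq> L" using that unfolding Mz_def down_def by auto
    have yM: "y \<notin> M"
    proof
      assume yM: "y \<in> M"
      have "y \<noteq> z" using yz Eirr by auto
      then have "M = L" using line_eq[OF M(1) L(1) yM M(2) L(2) L(3)] by simp
      then show False using M by simp
    qed
    have "card (M \<inter> N y) = psi" using psiD[OF P M(1) y yM M(2) yz] .
    moreover have "z \<in> M \<inter> N y" unfolding N_def using M z yz by auto
    moreover have "finite (M \<inter> N y)" using N_fin by simp
    ultimately show "card (B M) = psi - 1" unfolding B_def by simp
    show "finite (B M)" unfolding B_def using N_fin by simp
  qed
  have disj: "\<forall>D\<in>down x y. \<forall>D'\<in>down x y. D \<noteq> D' \<longrightarrow> A D \<inter> A D' = {}"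
  proof (intro ballI impI)
    fix D D' assume DD: "D \<in> down x y" "D' \<in> down x y" "D \<noteq> D'"
    show "A D \<inter> A D' = {}"
    proof (rule ccontr)
      assume "A D \<inter> A D' \<noteq> {}"
      then obtain p where pp: "p \<in> D" "p \<in> D'" "p \<noteq> y" unfolding A_def by auto
      have "D = D'" by (rule line_eq[OF Dprops(1)[OF DD(1)] Dprops(1)[OF DD(2)] pp(1) Dprops(2)[OF DD(1)] pp(2) Dprops(2)[OF DD(2)] pp(3)])
      then show False using DD by simp
    qed
  qed
  have cA: "card (\<Union>D\<in>down x y. A D) = card (down x y) * (psi - 1)"
  proof -
    have "card (\<Union>D\<in>down x y. A D) = (\<Sum>D\<in>down x y. card (A D))"
      by (rule card_UN_disjoint[OF down_fin]) (use Dprops disj in auto)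
    also have "\<dots> = (\<Sum>D\<in>down x y. psi - 1)" using Dprops by simp
    finally show ?thesis by simp
  qed
  have sub: "(\<Union>D\<in>down x y. A D) \<subseteq> (\<Union>M\<in>Mz. B M)"
  proof
    fix p assume "p \<in> (\<Union>D\<in>down x y. A D)"
    then obtain D where D: "D \<in> down x y" "p \<in> A D" by auto
    note Dp = Dprops[OF D(1)]
    have p: "p \<in> D" "E z p" "p \<noteq> y" "p \<in> V" using D(2) unfolding A_def N_def by auto
    have "\<exists>w\<in>D. d x w + 1 = d x y" using D(1) unfolding down_def by simp
    then obtain w where w: "w \<in> D" "d x w + 1 = i" using dy by auto
    have "p \<noteq> w"
    proof
      assume "p = w"
      then have "d x z \<le> d x w + 1" using d_adj(1)[OF x p(2)[THEN Esym]] by simp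
      then show False using w dz by simp
    qed
    then have "E w p" using CC_E Dp(1) w(1) p(1) by blast
    then have "d x p \<le> d x w + 1" using d_adj(1)[OF x] by blast
    moreover have "d x z \<le> d x p + 1" using d_adj(1)[OF x Esym[OF p(2)]] .
    ultimately have dp: "d x p = i" using w dz by linarith
    obtain M where M: "M \<in> CC" "z \<in> M" "p \<in> M" using line_ex[OF p(2)] by blast
    have "M \<noteq> L"
    proof
      assume "M = L"
      then have pL: "p \<in> L" using M(3) by simp
      have "D = L" by (rule line_eq[OF Dp(1) L(1) p(1) Dp(2) pL L(2) p(3)])
      then show False using Dp(3) L(3) by simp
    qed
    then have "M \<in> Mz" unfolding Mz_def down_def using M dp dz by auto
    moreover have "p \<in> B M" unfolding B_def N_def
      using M p CC_E[OF Dp(1) Dp(2) p(1)] Eirr by auto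
    ultimately show "p \<in> (\<Union>M\<in>Mz. B M)" by blast
  qed
  have fMz: "finite Mz" unfolding Mz_def using down_fin by simp
  have "card (down x y) * (psi - 1) \<le> card (\<Union>M\<in>Mz. B M)"
    unfolding cA[symmetric] by (rule card_mono) (use fMz Mprops sub in auto)
  also have "\<dots> \<le> (\<Sum>M\<in>Mz. card (B M))" by (rule card_UN_le[OF fMz])
  also have "\<dots> = (\<Sum>M\<in>Mz. psi - 1)" using Mprops by simp
  also have "\<dots> = card Mz * (psi - 1)" by simp
  finally have "card (down x y) * (psi - 1) \<le> card Mz * (psi - 1)" .
  then have "card (down x y) \<le> card Mz" using p2 by simp
  then show ?thesis using cz by simp
qed

lemma tau_ge:
  assumes P: "PsiConst psi" and p2: "psi \<ge> 2" and x: "x \<in> V"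
  shows "z \<in> V \<Longrightarrow> d x z = Suc n \<Longrightarrow> Suc n \<le> card (down x z)"
proof (induction n arbitrary: z)
  case 0
  then have "E x z" using d_1 x by simp
  then obtain L where L: "L \<in> CC" "x \<in> L" "z \<in> L" using line_ex by blast
  then have "L \<in> down x z" unfolding down_def using 0 d_refl by auto
  then have "card (down x z) > 0" using down_fin card_gt_0_iff by blast
  then show ?case by simp
next
  case (Suc n)
  obtain y where y: "y \<in> V" "d x y = Suc n" "E y z" using d_pred[OF x Suc.prems(1,2)] by blast
  have "Suc n \<le> card (down x y)" using Suc.IH y by simp
  moreover have "card (down x y) + 1 \<le> card (down x z)"
    by (rule tau_step[OF P p2 x y(1) Suc.prems(1) y(2) Suc.prems(2) y(3)])
  ultimately show ?case by simp
qed

lemma tau_le: "z \<in> V \<Longrightarrow> card (down x z) \<le> m"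
proof -
  assume z: "z \<in> V"
  have "down x z \<subseteq> LZ z" unfolding down_def LZ_def by auto
  moreover have "finite (LZ z)" unfolding LZ_def using CC_fin by simp
  ultimately have "card (down x z) \<le> card (LZ z)" by (simp add: card_mono)
  then show ?thesis using LZ_card[OF z] by simp
qed

lemma tau_main: assumes P: "PsiConst psi" and p2: "psi \<ge> 2" shows "diam < m ^ 2"
proof -
  obtain x z where xz: "x \<in> V" "z \<in> V" "d x z = diam" using diam_att by blast
  obtain n where n: "diam = Suc n" using D2 by (cases diam) auto
  have "diam \<le> card (down x z)" using tau_ge[OF P p2 xz(1) xz(2)] xz(3) n by simp
  also have "\<dots> \<le> m" using tau_le[OF xz(2)] .
  finally have "diam \<le> m" .
  moreover have "m < m ^ 2" using m2 by (simp add: power2_eq_square)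
  ultimately show ?thesis by simp
qed

end



lemma swap_gen:
  fixes f :: "'b \<Rightarrow> real"
  assumes "finite Y" "finite Z" "\<And>y. y \<in> Y \<Longrightarrow> T y \<subseteq> Z"
  shows "(\<Sum>y\<in>Y. \<Sum>z\<in>T y. f z) = (\<Sum>z\<in>Z. f z * real (card {y \<in> Y. z \<in> T y}))"
proof -
  have "(\<Sum>y\<in>Y. \<Sum>z\<in>T y. f z) = (\<Sum>y\<in>Y. \<Sum>z\<in>Z. (if z \<in> T y then f z else 0))"
  proof (rule sum.cong)
    fix y assume "y \<in> Y"
    then have "T y = Z \<inter> T y" using assms(3) by auto
    then have "(\<Sum>z\<in>T y. f z) = (\<Sum>z\<in>Z \<inter> T y. f z)" by simp
    also have "\<dots> = (\<Sum>z\<in>Z. (if z \<in> T y then f z else 0))"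
      using assms(2) by (simp add: sum.inter_restrict)
    finally show "(\<Sum>z\<in>T y. f z) = (\<Sum>z\<in>Z. (if z \<in> T y then f z else 0))" .
  qed simp
  also have "\<dots> = (\<Sum>z\<in>Z. \<Sum>y\<in>Y. (if z \<in> T y then f z else 0))" by (rule sum.swap)
  also have "\<dots> = (\<Sum>z\<in>Z. f z * real (card {y \<in> Y. z \<in> T y}))"
  proof (rule sum.cong)
    fix z assume "z \<in> Z"
    have "(\<Sum>y\<in>Y. (if z \<in> T y then f z else 0)) = (\<Sum>y\<in>{y \<in> Y. z \<in> T y}. f z)"
      by (rule sum.inter_filter[symmetric]) (rule assms(1))
    also have "\<dots> = f z * real (card {y \<in> Y. z \<in> T y})" by (simp add: mult.commute)
    finally show "(\<Sum>y\<in>Y. (if z \<in> T y then f z else 0)) = f z * real (card {y \<in> Y. z \<in> T y})" .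
  qed simp
  finally show ?thesis .
qed

context geo begin

definition "aa j = real (b 0) - real (b j) - real (c j)"

definition "Kn j i = (if i + 1 = j then c j else if i = j then b 0 - b j - c j else if i = j + 1 then b j else 0)"

lemma cnt_formula: assumes A: "A \<in> V" and B: "B \<in> V"
  shows "card {w \<in> V. E B w \<and> d A w = i} = Kn (d A B) i"
proof -
  let ?j = "d A B"
  show ?thesis
  proof (cases "i + 1 = ?j")
    case True
    then have "{w \<in> V. E B w \<and> d A w = i} = {w \<in> V. E B w \<and> d A w + 1 = d A B}" by auto
    then show ?thesis using cnt_c[OF A B] True unfolding Kn_def by simp
  next
    case F1: False
    show ?thesis
    proof (cases "i = ?j")
      case True
      then show ?thesis using a_cnt[OF A B] F1 unfolding Kn_def by simp
    next
      case F2: False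
      show ?thesis
      proof (cases "i = ?j + 1")
        case True
        then show ?thesis using cnt_b[OF A B] F1 F2 unfolding Kn_def by simp
      next
        case F3: False
        have e: "{w \<in> V. E B w \<and> d A w = i} = {}" using nbr_d[OF A] F1 F2 F3 by blast
        show ?thesis unfolding e Kn_def using F1 F2 F3 by simp
      qed
    qed
  qed
qed

lemma sum_nbr: assumes x: "x \<in> V" and y: "y \<in> V"
  shows "(\<Sum>w\<in>N y. h (d x w)) = real (c (d x y)) * h (d x y - 1) + aa (d x y) * h (d x y) + real (b (d x y)) * h (d x y + 1)"
proof -
  let ?j = "d x y"
  let ?A = "{w \<in> V. E y w \<and> d x w + 1 = ?j}"
  let ?B = "{w \<in> V. E y w \<and> d x w = ?j}"
  let ?C = "{w \<in> V. E y w \<and> d x w = ?j + 1}"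
  have u: "N y = ?A \<union> (?B \<union> ?C)" unfolding N_def using nbr_d[OF x] by blast
  have f: "finite ?A" "finite ?B" "finite ?C" using finV by auto
  have d1: "?A \<inter> (?B \<union> ?C) = {}" by auto
  have d2: "?B \<inter> ?C = {}" by auto
  have e1: "(\<Sum>w\<in>?A \<union> (?B \<union> ?C). h (d x w)) = (\<Sum>w\<in>?A. h (d x w)) + (\<Sum>w\<in>?B \<union> ?C. h (d x w))"
    by (rule sum.union_disjoint) (use f d1 in auto)
  have e2: "(\<Sum>w\<in>?B \<union> ?C. h (d x w)) = (\<Sum>w\<in>?B. h (d x w)) + (\<Sum>w\<in>?C. h (d x w))"
    by (rule sum.union_disjoint) (use f d2 in auto)
  have "(\<Sum>w\<in>N y. h (d x w)) = (\<Sum>w\<in>?A. h (d x w)) + ((\<Sum>w\<in>?B. h (d x w)) + (\<Sum>w\<in>?C. h (d x w)))"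
    unfolding u e1 e2 ..
  also have "(\<Sum>w\<in>?A. h (d x w)) = (\<Sum>w\<in>?A. h (?j - 1))"
  proof (rule sum.cong)
    fix w assume "w \<in> ?A"
    then have "d x w = ?j - 1" by auto
    then show "h (d x w) = h (?j - 1)" by simp
  qed simp
  also have "\<dots> = real (c ?j) * h (?j - 1)" using cnt_c[OF x y] by simp
  also have "(\<Sum>w\<in>?B. h (d x w)) = (\<Sum>w\<in>?B. h ?j)" by (rule sum.cong) auto
  also have "\<dots> = aa ?j * h ?j"
  proof -
    have "card ?B + b ?j + c ?j = b 0" using a_cnt[OF x y] .
    then have "real (card ?B) = aa ?j" unfolding aa_def by linarith
    then show ?thesis by simp
  qed
  also have "(\<Sum>w\<in>?C. h (d x w)) = (\<Sum>w\<in>?C. h (?j + 1))" by (rule sum.cong) auto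
  also have "\<dots> = real (b ?j) * h (?j + 1)" using cnt_b[OF x y] by simp
  finally show ?thesis by simp
qed

end

locale geo_ev = geo +
  fixes f :: "'a \<Rightarrow> real" and x0 :: 'a
  assumes x0: "x0 \<in> V" "f x0 \<noteq> 0"
  and eig: "x \<in> V \<Longrightarrow> (\<Sum>y\<in>N x. f y) = - real m * f x"
begin

abbreviation "th \<equiv> - real m"

definition "G i x = (\<Sum>z\<in>S x i. f z)"

lemma S_sub: "S x i \<subseteq> V" unfolding S_def by auto
lemma S_fin: "finite (S x i)" unfolding S_def using finV by simp

lemma G_alt: "G i x = (\<Sum>z\<in>V. if d x z = i then f z else 0)"
  unfolding G_def S_def using finV by (simp add: sum.inter_filter)

lemma B1: assumes x: "x \<in> V" shows "(\<Sum>y\<in>N x. G i y) = th * G i x"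
proof -
  have "(\<Sum>y\<in>N x. G i y) = (\<Sum>y\<in>N x. \<Sum>z\<in>S y i. f z)" unfolding G_def ..
  also have "\<dots> = (\<Sum>z\<in>V. f z * real (card {y \<in> N x. z \<in> S y i}))"
    by (rule swap_gen[OF N_fin finV S_sub])
  also have "\<dots> = (\<Sum>z\<in>V. f z * real (Kn (d x z) i))"
  proof (rule sum.cong)
    fix z assume z: "z \<in> V"
    have "{y \<in> N x. z \<in> S y i} = {y \<in> V. E x y \<and> d z y = i}"
      unfolding N_def S_def using z d_sym by auto
    then have "card {y \<in> N x. z \<in> S y i} = Kn (d z x) i" using cnt_formula[OF z x] by simp
    then show "f z * real (card {y \<in> N x. z \<in> S y i}) = f z * real (Kn (d x z) i)"
      using d_sym[of z x] by simp
  qed simp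
  finally have L: "(\<Sum>y\<in>N x. G i y) = (\<Sum>z\<in>V. f z * real (Kn (d x z) i))" .
  have "th * G i x = (\<Sum>w\<in>S x i. th * f w)" unfolding G_def by (simp add: sum_distrib_left)
  also have "\<dots> = (\<Sum>w\<in>S x i. \<Sum>z\<in>N w. f z)"
  proof (rule sum.cong)
    fix w assume "w \<in> S x i"
    then have "w \<in> V" using S_sub by auto
    then show "th * f w = (\<Sum>z\<in>N w. f z)" using eig[of w] by simp
  qed simp
  also have "\<dots> = (\<Sum>z\<in>V. f z * real (card {w \<in> S x i. z \<in> N w}))"
    by (rule swap_gen[OF S_fin finV]) (auto simp: N_def)
  also have "\<dots> = (\<Sum>z\<in>V. f z * real (Kn (d x z) i))"
  proof (rule sum.cong)
    fix z assume z: "z \<in> V"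
    have "{w \<in> S x i. z \<in> N w} = {w \<in> V. E z w \<and> d x w = i}"
      unfolding N_def S_def using z Esym by auto
    then have "card {w \<in> S x i. z \<in> N w} = Kn (d x z) i" using cnt_formula[OF x z] by simp
    then show "f z * real (card {w \<in> S x i. z \<in> N w}) = f z * real (Kn (d x z) i)" by simp
  qed simp
  finally show ?thesis using L by simp
qed

lemma B1b: assumes x: "x \<in> V" shows "th * G i x = (\<Sum>z\<in>V. f z * real (Kn (d x z) i))"
proof -
  have "th * G i x = (\<Sum>w\<in>S x i. th * f w)" unfolding G_def by (simp add: sum_distrib_left)
  also have "\<dots> = (\<Sum>w\<in>S x i. \<Sum>z\<in>N w. f z)"
  proof (rule sum.cong)
    fix w assume "w \<in> S x i"
    then have "w \<in> V" using S_sub by auto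
    then show "th * f w = (\<Sum>z\<in>N w. f z)" using eig[of w] by simp
  qed simp
  also have "\<dots> = (\<Sum>z\<in>V. f z * real (card {w \<in> S x i. z \<in> N w}))"
    by (rule swap_gen[OF S_fin finV]) (auto simp: N_def)
  also have "\<dots> = (\<Sum>z\<in>V. f z * real (Kn (d x z) i))"
  proof (rule sum.cong)
    fix z assume z: "z \<in> V"
    have "{w \<in> S x i. z \<in> N w} = {w \<in> V. E z w \<and> d x w = i}"
      unfolding N_def S_def using z Esym by auto
    then have "card {w \<in> S x i. z \<in> N w} = Kn (d x z) i" using cnt_formula[OF x z] by simp
    then show "f z * real (card {w \<in> S x i. z \<in> N w}) = f z * real (Kn (d x z) i)" by simp
  qed simp
  finally show ?thesis .
qed

lemma Kn_real: assumes x: "x \<in> V" and z: "z \<in> V"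
  shows "real (Kn (d x z) i) = (if d x z = i + 1 then real (c (i + 1)) else 0)
     + (if d x z = i then aa i else 0) + (if i \<noteq> 0 \<and> d x z = i - 1 then real (b (i - 1)) else 0)"
proof -
  let ?j = "d x z"
  have ac: "card {w \<in> V. E z w \<and> d x w = d x z} + b ?j + c ?j = b 0" using a_cnt[OF x z] .
  show ?thesis
  proof (cases "i + 1 = ?j")
    case True then show ?thesis unfolding Kn_def by auto
  next
    case F1: False
    show ?thesis
    proof (cases "i = ?j")
      case True
      then have "real (b 0 - b ?j - c ?j) = aa ?j" unfolding aa_def using ac by linarith
      then show ?thesis using True F1 unfolding Kn_def by auto
    next
      case F2: False
      show ?thesis
      proof (cases "i = ?j + 1")
        case True then show ?thesis using F1 F2 unfolding Kn_def by auto
      next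
        case F3: False
        then show ?thesis using F1 F2 F3 unfolding Kn_def by auto
      qed
    qed
  qed
qed

lemma B2: assumes x: "x \<in> V"
  shows "(\<Sum>z\<in>V. f z * real (Kn (d x z) i)) = real (c (i + 1)) * G (i + 1) x + aa i * G i x
          + (if i = 0 then 0 else real (b (i - 1)) * G (i - 1) x)"
proof -
  have "(\<Sum>z\<in>V. f z * real (Kn (d x z) i)) = (\<Sum>z\<in>V.
      real (c (i + 1)) * (if d x z = i + 1 then f z else 0)
    + aa i * (if d x z = i then f z else 0)
    + (if i = 0 then 0 else real (b (i - 1)) * (if d x z = i - 1 then f z else 0)))"
    by (rule sum.cong) (auto simp: Kn_real[OF x] algebra_simps)
  also have "\<dots> = real (c (i + 1)) * G (i + 1) x + aa i * G i x
          + (if i = 0 then 0 else real (b (i - 1)) * G (i - 1) x)"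
    unfolding G_alt by (simp add: sum.distrib sum_distrib_left)
  finally show ?thesis .
qed

lemma Grec: assumes x: "x \<in> V"
  shows "th * G i x = real (c (i + 1)) * G (i + 1) x + aa i * G i x
          + (if i = 0 then 0 else real (b (i - 1)) * G (i - 1) x)"
proof -
  have "th * G i x = (\<Sum>z\<in>V. f z * real (Kn (d x z) i))" by (rule B1b[OF x])
  also have "\<dots> = real (c (i + 1)) * G (i + 1) x + aa i * G i x
          + (if i = 0 then 0 else real (b (i - 1)) * G (i - 1) x)" by (rule B2[OF x])
  finally show ?thesis .
qed

end

context geo begin

definition "cp i = (\<Prod>j\<in>{1..i}. real (c j))"
definition "bp i = (\<Prod>j<i. real (b j))"

fun u :: "nat \<Rightarrow> real" where
  "u 0 = 1"
| "u (Suc 0) = - real m / real (b 0)"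
| "u (Suc (Suc i)) = ((- real m - aa (Suc i)) * u (Suc i) - real (c (Suc i)) * u i) / real (b (Suc i))"

lemma cp_Suc: "cp (Suc i) = cp i * real (c (Suc i))"
  unfolding cp_def by (simp add: prod.cl_ivl_Suc)

lemma bp_Suc: "bp (Suc i) = bp i * real (b i)"
  unfolding bp_def by simp

lemma bp_nz: "i \<le> diam \<Longrightarrow> bp i \<noteq> 0"
  unfolding bp_def using b_pos by (simp add: prod_zero_iff)

lemma u_rec: assumes "Suc i < diam"
  shows "real (b (Suc i)) * u (Suc (Suc i)) = (- real m - aa (Suc i)) * u (Suc i) - real (c (Suc i)) * u i"
proof -
  have "real (b (Suc i)) \<noteq> 0" using b_pos[OF assms] by simp
  then show ?thesis by simp
qed

end

context geo_ev begin

lemma G0: "x \<in> V \<Longrightarrow> G 0 x = f x"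
proof -
  assume x: "x \<in> V"
  have "S x 0 = {x}" unfolding S_def using d_0 x by auto
  then show ?thesis unfolding G_def by simp
qed

lemma G1: "x \<in> V \<Longrightarrow> G 1 x = th * f x"
proof -
  assume x: "x \<in> V"
  have "S x 1 = N x" unfolding S_def N_def using d_1 x by auto
  then show ?thesis unfolding G_def using eig[OF x] by simp
qed

lemma Gbig: "x \<in> V \<Longrightarrow> diam < i \<Longrightarrow> G i x = 0"
proof -
  assume x: "x \<in> V" and i: "diam < i"
  have "S x i = {}" unfolding S_def using d_le_diam[OF x] i by (auto simp: not_le[symmetric])
  then show ?thesis unfolding G_def by simp
qed

lemma Qpair: "Suc i \<le> diam \<Longrightarrow> (\<forall>x\<in>V. G i x * cp i = u i * bp i * f x) \<and> (\<forall>x\<in>V. G (Suc i) x * cp (Suc i) = u (Suc i) * bp (Suc i) * f x)"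
proof (induction i)
  case 0
  have c1': "c 1 = 1" using c1 D2 by simp
  have "real (b 0) \<noteq> 0" using k_pos by simp
  then show ?case using G0 G1 c1' by (simp add: cp_def bp_def)
next
  case (Suc i)
  then have IH: "\<forall>x\<in>V. G i x * cp i = u i * bp i * f x"
       "\<forall>x\<in>V. G (Suc i) x * cp (Suc i) = u (Suc i) * bp (Suc i) * f x" by simp_all
  have "\<forall>x\<in>V. G (Suc (Suc i)) x * cp (Suc (Suc i)) = u (Suc (Suc i)) * bp (Suc (Suc i)) * f x"
  proof
    fix x assume x: "x \<in> V"
    have rec: "th * G (Suc i) x = real (c (Suc (Suc i))) * G (Suc (Suc i)) x + aa (Suc i) * G (Suc i) x
          + real (b i) * G i x" using Grec[OF x, of "Suc i"] by simp
    have ur: "real (b (Suc i)) * u (Suc (Suc i)) = (th - aa (Suc i)) * u (Suc i) - real (c (Suc i)) * u i"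
      using u_rec Suc.prems by simp
    have bnz: "real (b (Suc i)) \<noteq> 0" using b_pos Suc.prems by simp
    have "G (Suc (Suc i)) x * cp (Suc (Suc i)) = cp (Suc i) * (real (c (Suc (Suc i))) * G (Suc (Suc i)) x)"
      by (simp add: cp_Suc)
    also have "\<dots> = cp (Suc i) * (th * G (Suc i) x - aa (Suc i) * G (Suc i) x - real (b i) * G i x)"
      using rec by simp
    also have "\<dots> = (th - aa (Suc i)) * (G (Suc i) x * cp (Suc i)) - real (b i) * real (c (Suc i)) * (G i x * cp i)"
      by (simp add: cp_Suc algebra_simps)
    also have "\<dots> = (th - aa (Suc i)) * (u (Suc i) * bp (Suc i) * f x) - real (b i) * real (c (Suc i)) * (u i * bp i * f x)"
      using IH x by simp
    also have "\<dots> = ((th - aa (Suc i)) * u (Suc i) - real (c (Suc i)) * u i) * bp (Suc i) * f x"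
      by (simp add: bp_Suc algebra_simps)
    also have "\<dots> = real (b (Suc i)) * u (Suc (Suc i)) * bp (Suc i) * f x" using ur by simp
    also have "\<dots> = u (Suc (Suc i)) * bp (Suc (Suc i)) * f x" by (simp add: bp_Suc algebra_simps)
    finally show "G (Suc (Suc i)) x * cp (Suc (Suc i)) = u (Suc (Suc i)) * bp (Suc (Suc i)) * f x" .
  qed
  then show ?case using IH by simp
qed

lemma root: "(th - aa diam) * u diam = real (c diam) * u (diam - 1)"
proof -
  obtain e where e: "diam = Suc e" using D2 by (cases diam) auto
  have Q: "G e x0 * cp e = u e * bp e * f x0" "G (Suc e) x0 * cp (Suc e) = u (Suc e) * bp (Suc e) * f x0"
    using Qpair[of e] e x0 by auto
  have e0: "e \<noteq> 0" using e D2 by simp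
  have rec: "th * G (Suc e) x0 = real (c (Suc (Suc e))) * G (Suc (Suc e)) x0 + aa (Suc e) * G (Suc e) x0
          + real (b e) * G e x0" using Grec[OF x0(1), of "Suc e"] by simp
  have "G (Suc (Suc e)) x0 = 0" using Gbig[OF x0(1)] e by simp
  then have rec2: "(th - aa (Suc e)) * G (Suc e) x0 = real (b e) * G e x0" using rec by (simp add: algebra_simps)
  have "(th - aa (Suc e)) * u (Suc e) * bp (Suc e) * f x0 = (th - aa (Suc e)) * (G (Suc e) x0 * cp (Suc e))"
    using Q by simp
  also have "\<dots> = real (c (Suc e)) * (real (b e) * (G e x0 * cp e))"
    using rec2 by (simp add: cp_Suc algebra_simps)
  also have "\<dots> = real (c (Suc e)) * u e * bp (Suc e) * f x0"
    using Q by (simp add: bp_Suc algebra_simps)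
  finally have "((th - aa (Suc e)) * u (Suc e)) * (bp (Suc e) * f x0) = (real (c (Suc e)) * u e) * (bp (Suc e) * f x0)"
    by (simp add: algebra_simps)
  moreover have "bp (Suc e) * f x0 \<noteq> 0" using bp_nz[of "Suc e"] e x0 by simp
  ultimately have "(th - aa (Suc e)) * u (Suc e) = real (c (Suc e)) * u e" by simp
  then show ?thesis using e by simp
qed

lemma sph: assumes v: "v \<in> V" and z: "z \<in> V"
  shows "(\<Sum>w\<in>N z. u (d v w)) = th * u (d v z)"
proof -
  let ?j = "d v z"
  have S: "(\<Sum>w\<in>N z. u (d v w)) = real (c ?j) * u (?j - 1) + aa ?j * u ?j + real (b ?j) * u (?j + 1)"
    by (rule sum_nbr[OF v z])
  have jd: "?j \<le> diam" using d_le_diam[OF v z] .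
  show ?thesis
  proof (cases ?j)
    case 0
    have "real (b 0) \<noteq> 0" using k_pos by simp
    then show ?thesis using S 0 c0 unfolding aa_def by simp
  next
    case (Suc i)
    show ?thesis
    proof (cases "?j = diam")
      case True
      then show ?thesis using S root b_diam by (simp add: algebra_simps)
    next
      case False
      then have "Suc i < diam" using jd Suc by simp
      then have "real (b (Suc i)) * u (Suc (Suc i)) = (th - aa (Suc i)) * u (Suc i) - real (c (Suc i)) * u i"
        using u_rec by simp
      then show ?thesis using S Suc by (simp add: algebra_simps)
    qed
  qed
qed

end

context geo begin

lemma N_union: assumes z: "z \<in> V" shows "N z = (\<Union>C\<in>LZ z. C - {z})"
proof (intro equalityI subsetI)
  fix w assume "w \<in> N z"
  then have "E z w" unfolding N_def by simp
  then obtain C where "C \<in> CC" "z \<in> C" "w \<in> C" using line_ex by blast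
  moreover have "w \<noteq> z" using \<open>E z w\<close> Eirr by auto
  ultimately show "w \<in> (\<Union>C\<in>LZ z. C - {z})" unfolding LZ_def by auto
next
  fix w assume "w \<in> (\<Union>C\<in>LZ z. C - {z})"
  then obtain C where "C \<in> CC" "z \<in> C" "w \<in> C" "w \<noteq> z" unfolding LZ_def by auto
  then show "w \<in> N z" unfolding N_def using CC_E CC_V by blast
qed

lemma LZ_disj: "\<forall>C\<in>LZ z. \<forall>C'\<in>LZ z. C \<noteq> C' \<longrightarrow> (C - {z}) \<inter> (C' - {z}) = {}"
proof (intro ballI impI)
  fix C C' assume CC': "C \<in> LZ z" "C' \<in> LZ z" "C \<noteq> C'"
  show "(C - {z}) \<inter> (C' - {z}) = {}"
  proof (rule ccontr)
    assume "(C - {z}) \<inter> (C' - {z}) \<noteq> {}"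
    then obtain w where "w \<in> C" "w \<in> C'" "w \<noteq> z" by auto
    then have "C = C'" using line_eq[of C C' z w] CC' unfolding LZ_def by auto
    then show False using CC' by simp
  qed
qed

lemma finCC: "C \<in> CC \<Longrightarrow> finite C" using CC_V finV by (meson finite_subset)

end

context geo_ev begin

lemma line_zero: assumes v: "v \<in> V" and C: "C \<in> CC" shows "(\<Sum>t\<in>C. u (d v t)) = 0"
proof -
  define g where "g t = u (d v t)" for t
  define SL where "SL L = (\<Sum>t\<in>L. g t)" for L
  have loc: "(\<Sum>L\<in>LZ z. SL L) = 0" if z: "z \<in> V" for z
  proof -
    have finLZ: "finite (LZ z)" unfolding LZ_def using CC_fin by simp
    have "(\<Sum>w\<in>N z. g w) = (\<Sum>L\<in>LZ z. \<Sum>t\<in>L - {z}. g t)"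
      unfolding N_union[OF z]
      by (rule sum.UNION_disjoint[OF finLZ]) (use LZ_disj finCC in \<open>auto simp: LZ_def\<close>)
    also have "\<dots> = (\<Sum>L\<in>LZ z. SL L - g z)"
    proof (rule sum.cong)
      fix L assume "L \<in> LZ z"
      then have "L \<in> CC" "z \<in> L" unfolding LZ_def by auto
      then show "(\<Sum>t\<in>L - {z}. g t) = SL L - g z" unfolding SL_def using finCC
        by (simp add: sum_diff1)
    qed simp
    also have "\<dots> = (\<Sum>L\<in>LZ z. SL L) - real m * g z"
      using LZ_card[OF z] by (simp add: sum_subtractf)
    finally have "(\<Sum>w\<in>N z. g w) = (\<Sum>L\<in>LZ z. SL L) - real m * g z" .
    moreover have "(\<Sum>w\<in>N z. g w) = th * g z" unfolding g_def by (rule sph[OF v z])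
    ultimately show ?thesis by simp
  qed
  have "(\<Sum>L\<in>CC. (SL L)^2) = (\<Sum>L\<in>CC. \<Sum>t\<in>{t. t \<in> V \<and> t \<in> L}. g t * SL L)"
  proof (rule sum.cong)
    fix L assume L: "L \<in> CC"
    then have "{t. t \<in> V \<and> t \<in> L} = L" using CC_V by auto
    then show "(SL L)^2 = (\<Sum>t\<in>{t. t \<in> V \<and> t \<in> L}. g t * SL L)"
      unfolding SL_def by (simp add: power2_eq_square sum_distrib_right)
  qed simp
  also have "\<dots> = (\<Sum>t\<in>V. \<Sum>L\<in>{L. L \<in> CC \<and> t \<in> L}. g t * SL L)"
    by (rule sum.swap_restrict[OF CC_fin finV])
  also have "\<dots> = (\<Sum>t\<in>V. g t * (\<Sum>L\<in>LZ t. SL L))"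
    unfolding LZ_def by (simp add: sum_distrib_left)
  also have "\<dots> = 0" using loc by simp
  finally have "(\<Sum>L\<in>CC. (SL L)^2) = 0" .
  then have "\<forall>L\<in>CC. (SL L)^2 = 0" using sum_nonneg_eq_0_iff[OF CC_fin, of "\<lambda>L. (SL L)^2"] by simp
  then show ?thesis using C unfolding SL_def g_def by simp
qed

lemma u1_nz: "u 1 \<noteq> 0" using m2 k_pos by simp

lemma psi_eq: assumes C: "C \<in> CC" and v: "v \<in> V" "v \<notin> C" and w: "w \<in> C" "E v w"
  shows "real (card (C \<inter> N v)) * u 1 + (real s - real (card (C \<inter> N v))) * u 2 = 0"
proof -
  have fC: "finite C" using finCC[OF C] .
  let ?A = "C \<inter> N v" and ?B = "C - N v"
  have dA: "d v t = 1" if "t \<in> ?A" for t using that d_1 v(1) unfolding N_def by auto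
  have dB: "d v t = 2" if "t \<in> ?B" for t
  proof -
    have t: "t \<in> C" "t \<notin> N v" using that by auto
    have tV: "t \<in> V" using CC_V C t by auto
    have wV: "w \<in> V" using CC_V C w by auto
    have "t \<noteq> w" using t w unfolding N_def using wV by auto
    then have "E w t" using CC_E C w t by blast
    have "d v t \<le> d v w + d w t" using d_tri[OF v(1) wV tV] .
    moreover have "d v w = 1" "d w t = 1" using d_1 v(1) wV tV w(2) \<open>E w t\<close> by auto
    moreover have "d v t \<noteq> 0" using d_0 v tV t by auto
    moreover have "d v t \<noteq> 1" using d_1 v(1) tV t unfolding N_def by auto
    ultimately show ?thesis by linarith
  qed
  have CU: "C = ?A \<union> ?B" by auto
  have fA: "finite ?A" "finite ?B" using fC by auto
  have dj: "?A \<inter> ?B = {}" by auto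
  have "0 = (\<Sum>t\<in>C. u (d v t))" using line_zero[OF v(1) C] by simp
  also have "\<dots> = (\<Sum>t\<in>?A \<union> ?B. u (d v t))" using CU by simp
  also have "\<dots> = (\<Sum>t\<in>?A. u (d v t)) + (\<Sum>t\<in>?B. u (d v t))"
    by (rule sum.union_disjoint[OF fA dj])
  also have "\<dots> = real (card ?A) * u 1 + real (card ?B) * u 2"
    using dA dB by simp
  also have "real (card ?B) = real s - real (card ?A)"
  proof -
    have "card (?A \<union> ?B) = card ?A + card ?B" by (rule card_Un_disjoint[OF fA dj])
    then have "card C = card ?A + card ?B" using CU by simp
    then show ?thesis using CCs[OF C] by simp
  qed
  finally show ?thesis by simp
qed

end

context geo_ev begin

lemma psi_const:
  assumes C: "C \<in> CC" "v \<in> V" "v \<notin> C" "w \<in> C" "E v w"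
    and C': "C' \<in> CC" "v' \<in> V" "v' \<notin> C'" "w' \<in> C'" "E v' w'"
  shows "card (C \<inter> N v) = card (C' \<inter> N v')"
proof -
  let ?n = "real (card (C \<inter> N v))" and ?n' = "real (card (C' \<inter> N v'))"
  have e1: "?n * u 1 + (real s - ?n) * u 2 = 0" by (rule psi_eq[OF C])
  have e2: "?n' * u 1 + (real s - ?n') * u 2 = 0" by (rule psi_eq[OF C'])
  have "u 1 \<noteq> u 2"
  proof
    assume eq: "u 1 = u 2"
    then have "real s * u 1 = 0" using e1 by (simp add: algebra_simps)
    then show False using s2 u1_nz by simp
  qed
  moreover have "(?n - ?n') * (u 1 - u 2) = 0" using e1 e2 by (simp add: algebra_simps)
  ultimately have "?n = ?n'" by simp
  then show ?thesis by simp
qed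

end

context geo_ev begin

lemma main: "diam < m ^ 2"
proof (cases "\<exists>C v p q. C \<in> CC \<and> v \<in> V \<and> v \<notin> C \<and> p \<in> C \<and> q \<in> C \<and> p \<noteq> q \<and> E v p \<and> E v q")
  case True
  then obtain C v p q where h: "C \<in> CC" "v \<in> V" "v \<notin> C" "p \<in> C" "q \<in> C" "p \<noteq> q" "E v p" "E v q"
    by blast
  let ?psi = "card (C \<inter> N v)"
  have sub: "{p, q} \<subseteq> C \<inter> N v" unfolding N_def using h EV by auto
  have "card {p, q} \<le> ?psi" by (rule card_mono[OF _ sub]) (simp add: N_fin)
  then have p2: "2 \<le> ?psi" using h(6) by simp
  have "PsiConst ?psi" unfolding PsiConst_def
  proof (intro allI impI)
    fix v' C' assume a: "C' \<in> CC" "v' \<in> V" "v' \<notin> C'" "\<exists>w\<in>C'. E v' w"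
    then obtain w' where w': "w' \<in> C'" "E v' w'" by blast
    show "card (C' \<inter> N v') = ?psi" by (rule psi_const[OF a(1,2,3) w' h(1,2,3,4,7)])
  qed
  then show ?thesis using tau_main p2 by blast
next
  case False
  then have NoTwo unfolding NoTwo_def by blast
  then show ?thesis by (rule terw)
qed

end

theorem proposition4p3:
  fixes V :: "'a set" and E :: "'a \<Rightarrow> 'a \<Rightarrow> bool"
    and b c :: "nat \<Rightarrow> nat" and m :: nat
  assumes "m \<ge> 2"
    and "distance_regular V E b c"
    and "smallest_eigenvalue V E (- real m)"
    and "geometric V E (b 0) (- real m)"
    and "diameter V E \<ge> 2"
    and "c 2 \<ge> 2"
  shows "diameter V E < m ^ 2"
proof -
  have sg: "simple_graph V E" and cg: "connected_graph V E"
    and cc: "\<forall>x\<in>V. \<forall>y\<in>V. card {z \<in> V. E y z \<and> gdist V E x z + 1 = gdist V E x y} = c (gdist V E x y)"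
    and cb: "\<forall>x\<in>V. \<forall>y\<in>V. card {z \<in> V. E y z \<and> gdist V E x z = gdist V E x y + 1} = b (gdist V E x y)"
    using assms(2) unfolding distance_regular_def by auto
  have grV: "gr V E" by (rule gr.intro[OF sg cg])
  have drgV: "drg V E b c"
  proof (rule drg.intro[OF grV], rule drg_axioms.intro)
    fix x y assume "x \<in> V" "y \<in> V"
    then show "card {z \<in> V. E y z \<and> gdist V E x z + 1 = gdist V E x y} = c (gdist V E x y)"
      and "card {z \<in> V. E y z \<and> gdist V E x z = gdist V E x y + 1} = b (gdist V E x y)"
      using cc cb by auto
  qed
  interpret drg V E b c by (rule drgV)
  have dm: "diam = diameter V E" by (simp add: diam_def)
  from assms(4) have "\<exists>CC. (\<forall>C\<in>CC. delsarte_clique V E (b 0) (- real m) C) \<and>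
          (\<forall>x y. E x y \<longrightarrow> (\<exists>!C. C \<in> CC \<and> x \<in> C \<and> y \<in> C))"
    unfolding geometric_def by (rule conjunct2)
  then obtain CC where CC1: "\<forall>C\<in>CC. delsarte_clique V E (b 0) (- real m) C"
    and CC2: "\<forall>x y. E x y \<longrightarrow> (\<exists>!C. C \<in> CC \<and> x \<in> C \<and> y \<in> C)"
    by (elim exE conjE)
  have D2': "2 \<le> diam" using assms(5) dm by simp
  have "b 0 > 0" using b_pos D2' by simp
  obtain x0 where x0: "x0 \<in> V" using Vne by auto
  have "card (N x0) > 0" using deg[OF x0] \<open>b 0 > 0\<close> by simp
  then have "N x0 \<noteq> {}" by auto
  then obtain y0 where "y0 \<in> N x0" by auto
  then have e0: "E x0 y0" unfolding N_def by simp
  have "\<exists>!C. C \<in> CC \<and> x0 \<in> C \<and> y0 \<in> C" using CC2 e0 by simp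
  then have "\<exists>C. C \<in> CC \<and> x0 \<in> C \<and> y0 \<in> C" by (rule ex1_implies_ex)
  then obtain C0 where C0: "C0 \<in> CC" by blast
  define s where "s = card C0"
  have dc: "is_clique V E C \<and> real (card C) = 1 + real (b 0) / (- (- real m))" if "C \<in> CC" for C
    using CC1 that unfolding delsarte_clique_def by blast
  have sk: "real s = 1 + real (b 0) / real m" using dc[OF C0] unfolding s_def by simp
  have CCs: "card C = s" if "C \<in> CC" for C
  proof -
    have "real (card C) = real s" using dc[OF that] sk by simp
    then show "card C = s" by simp
  qed
  have geoV: "geo V E b c m CC s"
  proof (rule geo.intro[OF drgV], rule geo_axioms.intro)
    show "m \<ge> 2" by (rule assms(1))
    show "C \<subseteq> V \<and> (\<forall>x\<in>C. \<forall>y\<in>C. x \<noteq> y \<longrightarrow> E x y)" if "C \<in> CC" for C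
      using dc[OF that] unfolding is_clique_def by blast
    show "card C = s" if "C \<in> CC" for C using CCs[OF that] .
    show "real s = 1 + real (b 0) / real m" by (rule sk)
    show "\<exists>!C. C \<in> CC \<and> x \<in> C \<and> y \<in> C" if "E x y" for x y using CC2 that by simp
    show "2 \<le> diam" by (rule D2')
    show "2 \<le> c 2" by (rule assms(6))
  qed
  from assms(3) have "adj_eigenvalue V E (- real m)" unfolding smallest_eigenvalue_def by simp
  then obtain f where f1: "\<exists>x\<in>V. f x \<noteq> 0"
    and f2: "\<forall>x\<in>V. (\<Sum>y\<in>V. (if E x y then 1 else 0) * f y) = - real m * f x"
    unfolding adj_eigenvalue_def by blast
  obtain z0 where z0: "z0 \<in> V" "f z0 \<noteq> 0" using f1 by blast
  have geoev: "geo_ev V E b c m CC s f z0"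
  proof (rule geo_ev.intro[OF geoV], rule geo_ev_axioms.intro)
    show "z0 \<in> V" "f z0 \<noteq> 0" by (rule z0(1), rule z0(2))
    show "(\<Sum>y\<in>N x. f y) = - real m * f x" if "x \<in> V" for x
    proof -
      have "(\<Sum>y\<in>N x. f y) = (\<Sum>y\<in>V. (if E x y then f y else 0))"
        unfolding N_def using finV by (rule sum.inter_filter)
      also have "\<dots> = (\<Sum>y\<in>V. (if E x y then 1 else 0) * f y)" by (rule sum.cong) auto
      also have "\<dots> = - real m * f x" using f2 that by blast
      finally show ?thesis .
    qed
  qed
  have "diam < m ^ 2" by (rule geo_ev.main[OF geoev])
  then show ?thesis using dm by simp
qed

end
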